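(* Let $H$ be a GCD-monoid. Let $a,c\in H$ and $b,d\in\mathrm{Sqf}\,H$ be such that $a$ and $b$ are relatively prime, $c$ and $d$ are relatively prime, and there exist $e,f\in\mathrm{Sqf}\,H$ and $m,n\in\mathbb{N}$ with $e^2\mid a$, $a\mid e^m$, $f^2\mid c$, $c\mid f^n$. If $ab\sim cd$, then $a\sim c$ and $b\sim d$.
   Context: A monoid means a commutative cancellative monoid (written multiplicatively); $H^{\ast}$ is its unit group, $\mathbb{N}=\{1,2,\dots\}$. $x\sim y$ means $x=uy$ with $u\in H^{\ast}$. Elements are relatively prime if all their common divisors are units. $\mathrm{Sqf}\,H$ is the set of elements not of the form $b^2c$ with $b,c\in H$, $b\notin H^{\ast}$. $H$ is a GCD-monoid if any two elements of $H$ have a greatest common divisor. *)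

theory Defs
  imports Main
begin

text \<open>A monoid is a commutative cancellative monoid; we take the carrier to be the
whole type of class comm_monoid_mult and assume cancellativity explicitly.\<close>

definition cancellative :: "'a::comm_monoid_mult itself \<Rightarrow> bool" where
  "cancellative _ \<longleftrightarrow> (\<forall>a b c :: 'a. a * b = a * c \<longrightarrow> b = c)"

definition munit :: "'a::comm_monoid_mult \<Rightarrow> bool" where
  "munit u \<longleftrightarrow> (\<exists>v. u * v = 1)"

definition massoc :: "'a::comm_monoid_mult \<Rightarrow> 'a \<Rightarrow> bool" where
  "massoc x y \<longleftrightarrow> (\<exists>u. munit u \<and> x = u * y)"

definition rel_prime :: "'a::comm_monoid_mult \<Rightarrow> 'a \<Rightarrow> bool" where
  "rel_prime x y \<longleftrightarrow> (\<forall>d. d dvd x \<and> d dvd y \<longrightarrow> munit d)"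

definition Sqf :: "'a::comm_monoid_mult set" where
  "Sqf = {a. \<not> (\<exists>b c. \<not> munit b \<and> a = b^2 * c)}"

definition is_gcd :: "'a::comm_monoid_mult \<Rightarrow> 'a \<Rightarrow> 'a \<Rightarrow> bool" where
  "is_gcd g x y \<longleftrightarrow> g dvd x \<and> g dvd y \<and> (\<forall>d. d dvd x \<and> d dvd y \<longrightarrow> d dvd g)"

definition gcd_monoid :: "'a::comm_monoid_mult itself \<Rightarrow> bool" where
  "gcd_monoid _ \<longleftrightarrow> (\<forall>x y :: 'a. \<exists>g. is_gcd g x y)"

end

theory Submission
  imports Defs
begin

lemma canc: "cancellative TYPE('a::comm_monoid_mult) \<Longrightarrow> (a::'a) * b = a * c \<Longrightarrow> b = c"
  unfolding cancellative_def by blast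

lemma munit_dvd1: "munit u \<longleftrightarrow> u dvd 1"
  unfolding munit_def dvd_def
proof
  assume "\<exists>v. u * v = 1" then show "\<exists>k. 1 = u * k" by (blast intro: sym)
next
  assume "\<exists>k. 1 = u * k" then show "\<exists>v. u * v = 1" by (blast intro: sym)
qed

lemma munit_dvdD: "munit u \<Longrightarrow> d dvd u \<Longrightarrow> munit d"
  unfolding munit_dvd1 by (rule dvd_trans[rotated])

lemma munit_mult: "munit u \<Longrightarrow> munit v \<Longrightarrow> munit (u * v)"
  unfolding munit_dvd1 using mult_dvd_mono[of u 1 v 1] by simp

lemma munit_dvd_any: "munit u \<Longrightarrow> u dvd x"
  unfolding munit_dvd1 by (rule dvd_trans[OF _ one_dvd])

lemma dvd_mult_unit: "munit u \<Longrightarrow> x dvd y * u \<Longrightarrow> x dvd y"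
proof -
  assume u: "munit u" and xy: "x dvd y * u"
  obtain v where v: "u * v = 1" using u unfolding munit_def by blast
  have "x dvd y * u * v" using xy by (rule dvd_mult2)
  then show "x dvd y" using v by (simp add: mult.assoc)
qed

lemma SqfD: "p \<in> Sqf \<Longrightarrow> b * b dvd p \<Longrightarrow> munit b"
  unfolding Sqf_def dvd_def by (auto simp: power2_eq_square)

lemma Sqf_dvd: "p \<in> Sqf \<Longrightarrow> q dvd p \<Longrightarrow> q \<in> Sqf"
proof -
  assume p: "p \<in> Sqf" and q: "q dvd p"
  obtain k where k: "p = q * k" using q by (auto simp: dvd_def)
  show "q \<in> Sqf" unfolding Sqf_def
  proof (clarsimp)
    fix b c assume "\<not> munit b" "q = b^2 * c"
    then have "p = b^2 * (c * k)" using k by (simp add: mult.assoc)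
    then show False using p \<open>\<not> munit b\<close> unfolding Sqf_def by blast
  qed
qed

lemma rel_prime_sym: "rel_prime x y \<Longrightarrow> rel_prime y x"
  unfolding rel_prime_def by blast

lemma gcd_ex: "gcd_monoid TYPE('a::comm_monoid_mult) \<Longrightarrow> \<exists>g. is_gcd g (x::'a) y"
  unfolding gcd_monoid_def by blast

lemma euclid:
  fixes x y z :: "'a::comm_monoid_mult"
  assumes C: "cancellative TYPE('a)" and G: "gcd_monoid TYPE('a)"
    and r: "rel_prime x y" and dv: "x dvd y * z"
  shows "x dvd z"
proof -
  obtain g where g: "is_gcd g x y" using gcd_ex[OF G] by blast
  have gu: "munit g" using g r unfolding is_gcd_def rel_prime_def by blast
  obtain h where h: "is_gcd h (z*x) (z*y)" using gcd_ex[OF G] by blast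
  have "z*g dvd z*x" "z*g dvd z*y" using g unfolding is_gcd_def by (simp_all add: mult_dvd_mono)
  then have "z*g dvd h" using h unfolding is_gcd_def by blast
  then obtain t where ht: "h = z*g*t" by (auto simp: dvd_def)
  have "h dvd z*x" using h unfolding is_gcd_def by blast
  then obtain s where "z*x = z*(g*t*s)" using ht by (auto simp: dvd_def mult.assoc)
  then have "x = g*t*s" using canc[OF C] by blast
  then have gtx: "g*t dvd x" by auto
  have "h dvd z*y" using h unfolding is_gcd_def by blast
  then obtain s' where "z*y = z*(g*t*s')" using ht by (auto simp: dvd_def mult.assoc)
  then have "y = g*t*s'" using canc[OF C] by blast
  then have gty: "g*t dvd y" by auto
  have "g*t dvd g" using g gtx gty unfolding is_gcd_def by blast
  then obtain r' where "g * 1 = g*(t*r')" by (auto simp: dvd_def mult.assoc)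
  then have "1 = t*r'" by (rule canc[OF C])
  then have "t*r' = 1" by simp
  then have tu: "munit t" unfolding munit_def by blast
  have "x dvd h" using h dv unfolding is_gcd_def by (simp add: mult.commute)
  then have "x dvd z * (g*t)" using ht by (simp add: mult.assoc)
  then show ?thesis using dvd_mult_unit munit_mult[OF gu tu] by blast
qed

lemma rel_prime_mult:
  fixes x y z :: "'a::comm_monoid_mult"
  assumes C: "cancellative TYPE('a)" and G: "gcd_monoid TYPE('a)"
    and "rel_prime x y" "rel_prime x z"
  shows "rel_prime x (y*z)"
  unfolding rel_prime_def
proof (intro allI impI)
  fix d assume d: "d dvd x \<and> d dvd y*z"
  have "rel_prime d y" unfolding rel_prime_def
  proof (intro allI impI)
    fix q assume q: "q dvd d \<and> q dvd y"
    then have "q dvd x" using d dvd_trans[of q d x] by blast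
    then show "munit q" using q assms(3) unfolding rel_prime_def by blast
  qed
  then have "d dvd z" using euclid[OF C G] d by blast
  then show "munit d" using assms(4) d unfolding rel_prime_def by blast
qed

lemma rel_prime_pow:
  fixes x y :: "'a::comm_monoid_mult"
  assumes C: "cancellative TYPE('a)" and G: "gcd_monoid TYPE('a)"
    and "rel_prime x y"
  shows "rel_prime x (y^k)"
proof (induction k)
  case 0
  then show ?case unfolding rel_prime_def munit_dvd1 by simp
next
  case (Suc k)
  then show ?case using rel_prime_mult[OF C G assms(3)] by simp
qed

lemma sqf_dvd_pow:
  fixes p e :: "'a::comm_monoid_mult"
  assumes C: "cancellative TYPE('a)" and G: "gcd_monoid TYPE('a)"
    and p: "p \<in> Sqf" and dv: "p dvd e^(Suc k)"
  shows "p dvd e"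
proof -
  obtain g where g: "is_gcd g p e" using gcd_ex[OF G] by blast
  obtain p' where pp: "p = g*p'" using g unfolding is_gcd_def dvd_def by blast
  obtain e' where ee: "e = g*e'" using g unfolding is_gcd_def dvd_def by blast
  have cop: "rel_prime p' e'" unfolding rel_prime_def
  proof (intro allI impI)
    fix d assume d: "d dvd p' \<and> d dvd e'"
    have "g*d dvd p" "g*d dvd e" using d pp ee by (simp_all add: mult_dvd_mono)
    then have "g*d dvd g" using g unfolding is_gcd_def by blast
    then obtain r where "g*1 = g*(d*r)" by (auto simp: dvd_def mult.assoc)
    then have "1 = d*r" by (rule canc[OF C])
    then have "d*r = 1" by simp
    then show "munit d" unfolding munit_def by blast
  qed
  have copg: "rel_prime p' g" unfolding rel_prime_def
  proof (intro allI impI)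
    fix d assume d: "d dvd p' \<and> d dvd g"
    have "d*d dvd p'*g" using d by (intro mult_dvd_mono) auto
    moreover have "p'*g = p" using pp by (simp only: mult.commute)
    ultimately have "d*d dvd p" by simp
    then show "munit d" using SqfD[OF p] by blast
  qed
  have "e^(Suc k) = g * (g^k * e'^(Suc k))"
    unfolding ee power_mult_distrib power_Suc by (simp add: mult_ac)
  moreover obtain s where "e^(Suc k) = p * s" using dv by (auto simp: dvd_def)
  ultimately have "g * (g^k * e'^(Suc k)) = g * (p' * s)" using pp
    by (simp only: mult.assoc)
  then have "g^k * e'^(Suc k) = p' * s" by (rule canc[OF C])
  then have pd: "p' dvd g^k * e'^(Suc k)" by simp
  have R: "rel_prime p' (g^k * e'^(Suc k))"
    using rel_prime_mult[OF C G rel_prime_pow[OF C G copg] rel_prime_pow[OF C G cop]] .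
  have "munit p'" using R[unfolded rel_prime_def, rule_format, of p'] pd by simp
  then obtain v where v: "p' * v = 1" unfolding munit_def by blast
  have "g = p * v" using pp v by (simp add: mult.assoc)
  then have "p dvd g" by simp
  moreover have "g dvd e" using g unfolding is_gcd_def by blast
  ultimately show ?thesis by (rule dvd_trans)
qed

lemma massoc_dvd2: "massoc x y \<Longrightarrow> x dvd y"
proof -
  assume "massoc x y"
  then obtain u v where uv: "u * v = 1" "x = u * y" unfolding massoc_def munit_def by blast
  have "x * v = (u * v) * y" using uv(2) by (simp add: mult_ac)
  then have "y = x * v" using uv(1) by simp
  then show "x dvd y" by simp
qed

lemma key:
  fixes a b c d e :: "'a::comm_monoid_mult"
  assumes C: "cancellative TYPE('a)" and G: "gcd_monoid TYPE('a)"
    and d: "d \<in> Sqf" and cd: "rel_prime c d" and m: "m \<ge> 1"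
    and e2: "e^2 dvd a" and ae: "a dvd e^m" and ab: "massoc (a * b) (c * d)"
  shows "a dvd c"
proof -
  have ad: "rel_prime a d" unfolding rel_prime_def
  proof (intro allI impI)
    fix p assume p: "p dvd a \<and> p dvd d"
    have ps: "p \<in> Sqf" using Sqf_dvd[OF d] p by blast
    obtain k where mk: "m = Suc k" using m by (cases m) auto
    have "p dvd e^(Suc k)" using p ae mk dvd_trans[of p a "e^m"] by blast
    then have pe: "p dvd e" using sqf_dvd_pow[OF C G ps] by blast
    have "p*p dvd e*e" by (rule mult_dvd_mono[OF pe pe])
    then have "p*p dvd e^2" by (simp only: power2_eq_square)
    then have "p*p dvd a" using e2 by (rule dvd_trans)
    then have "p*p dvd a*b" by (rule dvd_mult2)
    moreover have "a*b dvd c*d" using massoc_dvd2[OF ab] .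
    ultimately have pcd: "p*p dvd c*d" by (rule dvd_trans)
    have rpc: "rel_prime (p*p) c"
    proof -
      have "rel_prime c p" unfolding rel_prime_def
      proof (intro allI impI)
        fix q assume q: "q dvd c \<and> q dvd p"
        then have "q dvd d" using p dvd_trans[of q p d] by blast
        then show "munit q" using q cd unfolding rel_prime_def by blast
      qed
      then have "rel_prime c (p*p)" using rel_prime_mult[OF C G, of c p p] by blast
      then show ?thesis by (rule rel_prime_sym)
    qed
    have "p*p dvd d" using euclid[OF C G rpc pcd] .
    then show "munit p" using SqfD[OF d] by blast
  qed
  have "a dvd a*b" by simp
  then have "a dvd c*d" using massoc_dvd2[OF ab] by (rule dvd_trans)
  then have "a dvd d*c" by (simp only: mult.commute)
  then show ?thesis by (rule euclid[OF C G ad])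
qed

lemma massoc_sym: "massoc x y \<Longrightarrow> massoc y x"
proof -
  assume "massoc x y"
  then obtain u v where uv: "u * v = 1" "x = u * y" unfolding massoc_def munit_def by blast
  have "v * x = (u * v) * y" using uv(2) by (simp add: mult_ac)
  then have "y = v * x" using uv(1) by simp
  moreover have "munit v" using uv unfolding munit_def by (auto simp: mult.commute)
  ultimately show "massoc y x" unfolding massoc_def by blast
qed

theorem proposition5p2:
  fixes a b c d e f :: "'a::comm_monoid_mult" and m n :: nat
  assumes "cancellative TYPE('a)"
    and "gcd_monoid TYPE('a)"
    and "b \<in> Sqf" and "d \<in> Sqf"
    and "rel_prime a b" and "rel_prime c d"
    and "e \<in> Sqf" and "f \<in> Sqf" and "m \<ge> 1" and "n \<ge> 1"
    and "e^2 dvd a" and "a dvd e^m" and "f^2 dvd c" and "c dvd f^n"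
    and "massoc (a * b) (c * d)"
  shows "massoc a c \<and> massoc b d"
proof -
  note C = assms(1) and G = assms(2)
  have ac: "a dvd c" using key[OF C G assms(4,6,9,11,12,15)] .
  have ca: "c dvd a" using key[OF C G assms(3,5,10,13,14) massoc_sym[OF assms(15)]] .
  obtain u where u: "c = a*u" using ac by (auto simp: dvd_def)
  obtain v where v: "a = c*v" using ca by (auto simp: dvd_def)
  have a1: "a*u*v = a" using v by (simp only: u)
  have "a*1 = a*(u*v)" using a1 by (simp add: mult.assoc)
  then have "1 = u*v" by (rule canc[OF C])
  then have uv: "u*v = 1" by simp
  then have "munit v" unfolding munit_def by (auto simp: mult.commute)
  moreover have "a = v * c" using v by (simp add: mult.commute)
  ultimately have acs: "massoc a c" unfolding massoc_def by blast
  obtain w where w: "munit w" "a*b = w*(c*d)" using assms(15) unfolding massoc_def by blast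
  have "a*b = a*(w*u*d)" using w u by (simp add: mult_ac)
  then have "b = w*u*d" using canc[OF C] by blast
  moreover have "munit u" using uv unfolding munit_def by blast
  then have "munit (w*u)" using munit_mult w(1) by blast
  ultimately have "massoc b d" unfolding massoc_def by blast
  with acs show ?thesis by blast
qed

end
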